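(* Assume $q<\ell$. Fix $Z_0\in S^{\ell}_{q,p}$ and $E_0\in\Lambda^{\ell}_{Z_0}$. Let $\mathcal{S}_0=\{E_0\}$ and for $j\ge1$ define inductively $$\mathcal{S}_j=\bigcup_{F\in\mathcal{S}_{j-1}}\{E\in N(\ell,m):\dim E=\ell,\ \dim(E\cap F)\ge\ell-1\}.$$ Then $$\bigcup_{E\in\mathcal{S}_q}Gr(q,E)=S^{\ell}_{q,p}.$$
   Context: Let $q<p$ and $q\le\ell\le(p+q)/2$ be positive integers, $m=p+q-\ell$. $Gr(q,p)$ is the Grassmannian of $q$-planes in $\mathbb{C}^{p+q}$; $\langle u,v\rangle_{\ell,m}=-\sum_{i=1}^{\ell}u_i\bar v_i+\sum_{i=\ell+1}^{p+q}u_i\bar v_i$; $S^{\ell}_{q,p}=\{Z\in Gr(q,p):\langle\cdot,\cdot\rangle_{\ell,m}|_Z=0\}$. $N(\ell,m)$ is the set of subspaces $F\subset\mathbb{C}^{p+q}$ with $\langle\cdot,\cdot\rangle_{\ell,m}|_F=0$, and for $F\in N(\ell,m)$ and $n\ge\dim F$, $\Lambda^n_F=\{E\in N(\ell,m):\dim E=n,\ F\subset E\}$. For a subspace $E$, $Gr(q,E)$ denotes the set of $q$-dimensional subspaces of $E$. *)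

theory Defs
  imports "HOL-Analysis.Analysis" "HOL-Library.Function_Algebras"
begin

text \<open>Vectors of C^N are modelled as functions nat => complex vanishing at all
indices >= N (coordinate i of the paper is index i-1 here).\<close>

definition cscale :: "complex \<Rightarrow> (nat \<Rightarrow> complex) \<Rightarrow> (nat \<Rightarrow> complex)" where
  "cscale c v = (\<lambda>i. c * v i)"

definition ambient :: "nat \<Rightarrow> (nat \<Rightarrow> complex) set" where
  "ambient N = {v. \<forall>i\<ge>N. v i = 0}"

definition csubspace :: "(nat \<Rightarrow> complex) set \<Rightarrow> bool" where
  "csubspace W = module.subspace cscale W"

definition cdim :: "(nat \<Rightarrow> complex) set \<Rightarrow> nat" where
  "cdim W = vector_space.dim cscale W"

definition herm :: "nat \<Rightarrow> nat \<Rightarrow> (nat \<Rightarrow> complex) \<Rightarrow> (nat \<Rightarrow> complex) \<Rightarrow> complex" where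
  "herm l m u v = - (\<Sum>i<l. u i * cnj (v i)) + (\<Sum>i\<in>{l..<l+m}. u i * cnj (v i))"

definition isotropic :: "nat \<Rightarrow> nat \<Rightarrow> (nat \<Rightarrow> complex) set \<Rightarrow> bool" where
  "isotropic l m F \<longleftrightarrow> (\<forall>u\<in>F. \<forall>v\<in>F. herm l m u v = 0)"

definition Grass :: "nat \<Rightarrow> nat \<Rightarrow> (nat \<Rightarrow> complex) set set" where
  "Grass q p = {Z. csubspace Z \<and> Z \<subseteq> ambient (p+q) \<and> cdim Z = q}"

text \<open>S^l_{q,p}, with m = p+q-l.\<close>
definition Sset :: "nat \<Rightarrow> nat \<Rightarrow> nat \<Rightarrow> (nat \<Rightarrow> complex) set set" where
  "Sset l q p = {Z \<in> Grass q p. isotropic l (p+q-l) Z}"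

definition Nset :: "nat \<Rightarrow> nat \<Rightarrow> (nat \<Rightarrow> complex) set set" where
  "Nset l m = {F. csubspace F \<and> F \<subseteq> ambient (l+m) \<and> isotropic l m F}"

definition Lambda :: "nat \<Rightarrow> nat \<Rightarrow> nat \<Rightarrow> (nat \<Rightarrow> complex) set \<Rightarrow> (nat \<Rightarrow> complex) set set" where
  "Lambda l m n F = {E \<in> Nset l m. cdim E = n \<and> F \<subseteq> E}"

definition GrE :: "nat \<Rightarrow> (nat \<Rightarrow> complex) set \<Rightarrow> (nat \<Rightarrow> complex) set set" where
  "GrE q E = {Z. csubspace Z \<and> Z \<subseteq> E \<and> cdim Z = q}"

fun Sfam :: "nat \<Rightarrow> nat \<Rightarrow> (nat \<Rightarrow> complex) set \<Rightarrow> nat \<Rightarrow> (nat \<Rightarrow> complex) set set" where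
  "Sfam l m E0 0 = {E0}"
| "Sfam l m E0 (Suc j) =
     (\<Union>F\<in>Sfam l m E0 j. {E \<in> Nset l m. cdim E = l \<and> cdim (E \<inter> F) \<ge> l - 1})"

end

theory Submission imports Defs begin

lemma vs_cscale: "vector_space cscale"
  by unfold_locales (auto simp: cscale_def fun_eq_iff algebra_simps)

interpretation V: vector_space cscale by (rule vs_cscale)

lemma csub_eq: "csubspace W = V.subspace W" by (simp add: csubspace_def)
lemma cdim_eq: "cdim W = V.dim W" by (simp add: cdim_def)

definition ee :: "nat \<Rightarrow> nat \<Rightarrow> complex" where "ee i = (\<lambda>j. if j = i then 1 else 0)"

lemma sum_fun_app: "(\<Sum>i\<in>A. (f i :: nat \<Rightarrow> complex)) j = (\<Sum>i\<in>A. f i j)"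
  by (induction A rule: infinite_finite_induct) auto

lemma amb_span: "ambient N \<subseteq> V.span (ee ` {..<N})"
proof
  fix v assume v: "v \<in> ambient N"
  have "v = (\<Sum>i<N. cscale (v i) (ee i))"
  proof
    fix j
    show "v j = (\<Sum>i<N. cscale (v i) (ee i)) j"
      using v by (auto simp: sum_fun_app cscale_def ee_def ambient_def if_distrib cong: if_cong)
  qed
  also have "\<dots> \<in> V.span (ee ` {..<N})"
    by (intro V.span_sum V.span_scale V.span_base) auto
  finally show "v \<in> V.span (ee ` {..<N})" .
qed

lemma amb_sub: "V.subspace (ambient N)"
  by (auto simp: V.subspace_def ambient_def cscale_def)

lemma indep_bound: "V.independent B \<Longrightarrow> B \<subseteq> ambient N \<Longrightarrow> finite B \<and> card B \<le> N"
proof -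
  assume a: "V.independent B" "B \<subseteq> ambient N"
  have "finite B \<and> card B \<le> card (ee ` {..<N})"
    using V.independent_span_bound[of "ee ` {..<N}" B] amb_span[of N] a by blast
  moreover have "card (ee ` {..<N}) \<le> N" using card_image_le[of "{..<N}" ee] by simp
  ultimately show ?thesis by linarith
qed


lemma K_bound:
  assumes "V.subspace W" "W \<subseteq> ambient N" "V.independent C" "C \<subseteq> W"
  shows "finite C \<and> card C \<le> V.dim W"
proof -
  obtain B where B: "C \<subseteq> B" "B \<subseteq> W" "V.independent B" "W \<subseteq> V.span B"
    using V.maximal_independent_subset_extend[OF assms(4,3)] by blast
  have fB: "finite B" using indep_bound[OF B(3)] B(2) assms(2) by blast
  have "card B = V.dim W" using V.basis_card_eq_dim[OF B(2,4,3)] .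
  then show ?thesis using B(1) fB card_mono finite_subset by metis
qed

lemma basis_ex:
  assumes "V.subspace W" "W \<subseteq> ambient N"
  obtains B where "finite B" "B \<subseteq> W" "V.independent B" "V.span B = W" "card B = V.dim W"
proof -
  obtain B where B: "B \<subseteq> W" "V.independent B" "W \<subseteq> V.span B" "card B = V.dim W"
    using V.basis_exists by blast
  have "finite B" using indep_bound[OF B(2)] B(1) assms(2) by blast
  moreover have "V.span B = W" using V.span_subspace[OF B(1,3) assms(1)] .
  ultimately show ?thesis using that B by blast
qed

lemma dim_mono':
  assumes "V.subspace U" "V.subspace W" "U \<subseteq> W" "W \<subseteq> ambient N"
  shows "V.dim U \<le> V.dim W"
proof -
  have Ua: "U \<subseteq> ambient N" using assms(3,4) by blast
  obtain B where B: "finite B" "B \<subseteq> U" "V.independent B" "V.span B = U" "card B = V.dim U"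
    by (rule basis_ex[OF assms(1) Ua])
  have "B \<subseteq> W" using B(2) assms(3) by blast
  then have "card B \<le> V.dim W" using K_bound[OF assms(2,4) B(3)] by blast
  then show ?thesis using B(5) by simp
qed

lemma dim_eq_sub:
  assumes "V.subspace U" "V.subspace W" "U \<subseteq> W" "W \<subseteq> ambient N" "V.dim W \<le> V.dim U"
  shows "U = W"
proof (rule ccontr)
  assume "U \<noteq> W"
  then obtain w where w: "w \<in> W" "w \<notin> U" using assms(3) by blast
  have Ua: "U \<subseteq> ambient N" using assms(3,4) by blast
  obtain B where B: "finite B" "B \<subseteq> U" "V.independent B" "V.span B = U" "card B = V.dim U"
    by (rule basis_ex[OF assms(1) Ua])
  have "V.independent (insert w B)" using V.independent_insertI[of w B] B w by simp
  moreover have "insert w B \<subseteq> W" using w B assms(3) by blast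
  ultimately have "card (insert w B) \<le> V.dim W" using K_bound[OF assms(2,4)] by blast
  moreover have "w \<notin> B" using w B by blast
  ultimately show False using B assms(5) by simp
qed

lemma span_ins_sub:
  assumes "V.subspace U" "V.span B = U"
  shows "V.span (insert x U) \<subseteq> V.span (insert x B)"
  using assms V.span_mono[of B "insert x B"]
  by (intro V.span_minimal) (auto intro: V.span_base)

lemma dim_ins_le:
  assumes "V.subspace U" "U \<subseteq> ambient N"
  shows "V.dim (V.span (insert x U)) \<le> V.dim U + 1"
proof -
  obtain B where B: "finite B" "B \<subseteq> U" "V.independent B" "V.span B = U" "card B = V.dim U"
    by (rule basis_ex[OF assms])
  have "V.dim (V.span (insert x U)) \<le> card (insert x B)"
    by (rule V.dim_le_card) (use span_ins_sub[OF assms(1) B(4)] B(1) in auto)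
  also have "\<dots> \<le> card B + 1" by (simp add: B(1) card_insert_if)
  finally show ?thesis using B by simp
qed

lemma dim_ins_eq:
  assumes "V.subspace U" "U \<subseteq> ambient N" "x \<notin> U"
  shows "V.dim (V.span (insert x U)) = V.dim U + 1"
proof -
  obtain B where B: "finite B" "B \<subseteq> U" "V.independent B" "V.span B = U" "card B = V.dim U"
    by (rule basis_ex[OF assms(1,2)])
  have "V.dim (V.span (insert x U)) = card (insert x B)"
  proof (rule V.dim_unique)
    show "insert x B \<subseteq> V.span (insert x U)" using B(2) V.span_superset[of "insert x U"] by blast
    show "V.span (insert x U) \<subseteq> V.span (insert x B)" using span_ins_sub[OF assms(1) B(4)] .
    show "V.independent (insert x B)" using V.independent_insertI[of x B] B assms(3) by simp
  qed simp
  moreover have "x \<notin> B" using B(2) assms(3) by blast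
  ultimately show ?thesis using B(1,5) by simp
qed

lemma herm_add_l: "herm l m (u + u') v = herm l m u v + herm l m u' v"
  by (simp add: herm_def sum.distrib algebra_simps)
lemma herm_scale_l: "herm l m (cscale c u) v = c * herm l m u v"
  by (simp add: herm_def cscale_def sum_distrib_left algebra_simps)
lemma herm_add_r: "herm l m u (v + v') = herm l m u v + herm l m u v'"
  by (simp add: herm_def sum.distrib algebra_simps)
lemma herm_scale_r: "herm l m u (cscale c v) = cnj c * herm l m u v"
  by (simp add: herm_def cscale_def sum_distrib_left algebra_simps)
lemma herm_sym: "herm l m v u = cnj (herm l m u v)"
  by (simp add: herm_def mult.commute)
lemma herm_zero_l: "herm l m 0 v = 0" by (simp add: herm_def)
lemma herm_zero_r: "herm l m v 0 = 0" by (simp add: herm_def)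

lemma perp_l_sub: "V.subspace {w. herm l m w u = 0}"
  by (auto simp: V.subspace_def herm_add_l herm_scale_l herm_zero_l)
lemma perp_r_sub: "V.subspace {w. herm l m u w = 0}"
  by (auto simp: V.subspace_def herm_add_r herm_scale_r herm_zero_r)

lemma iso_span:
  assumes "\<forall>a\<in>S. \<forall>b\<in>S. herm l m a b = 0"
  shows "isotropic l m (V.span S)"
proof -
  have 1: "\<forall>b\<in>S. \<forall>a\<in>V.span S. herm l m a b = 0"
    using V.span_minimal[OF _ perp_l_sub] assms by blast
  have "\<forall>a\<in>V.span S. \<forall>b\<in>V.span S. herm l m a b = 0"
  proof (intro ballI)
    fix a b assume a: "a \<in> V.span S" and b: "b \<in> V.span S"
    have "S \<subseteq> {w. herm l m a w = 0}" using 1 a by blast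
    then show "herm l m a b = 0" using V.span_minimal[OF _ perp_r_sub] b by blast
  qed
  then show ?thesis by (simp add: isotropic_def)
qed


lemma herm_diff_l: "herm l m (u - u') v = herm l m u v - herm l m u' v"
  by (simp add: herm_def sum_subtractf algebra_simps)

lemma dim_perp:
  assumes "V.subspace F" "F \<subseteq> ambient N"
  shows "V.dim F \<le> V.dim (F \<inter> {w. herm l m w v = 0}) + 1"
proof -
  let ?K = "F \<inter> {w. herm l m w v = 0}"
  have Ks: "V.subspace ?K" using V.subspace_inter[OF assms(1) perp_l_sub] .
  have Ka: "?K \<subseteq> ambient N" using assms(2) by blast
  show ?thesis
  proof (cases "F \<subseteq> {w. herm l m w v = 0}")
    case True then have "?K = F" by blast
    then show ?thesis by simp
  next
    case False
    then obtain b where b: "b \<in> F" "herm l m b v \<noteq> 0" by blast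
    have Fsub: "F \<subseteq> V.span (insert b ?K)"
    proof
      fix f assume f: "f \<in> F"
      let ?c = "herm l m f v / herm l m b v"
      have "cscale ?c b \<in> F" by (rule V.subspace_scale[OF assms(1) b(1)])
      then have "f - cscale ?c b \<in> F" by (rule V.subspace_diff[OF assms(1) f])
      moreover have "herm l m (f - cscale ?c b) v = 0"
        using b by (simp add: herm_diff_l herm_scale_l)
      ultimately have "f - cscale ?c b \<in> ?K" by blast
      then have "f - cscale ?c b \<in> V.span ?K" by (rule V.span_base)
      then show "f \<in> V.span (insert b ?K)" by (subst V.span_breakdown_eq) (rule exI)
    qed
    have Wa: "V.span (insert b ?K) \<subseteq> ambient N"
      by (rule V.span_minimal[OF _ amb_sub]) (use b assms(2) in blast)
    have "V.dim F \<le> V.dim (V.span (insert b ?K))"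
      by (rule dim_mono'[OF assms(1) V.subspace_span Fsub Wa])
    also have "\<dots> \<le> V.dim ?K + 1" by (rule dim_ins_le[OF Ks Ka])
    finally show ?thesis .
  qed
qed

lemma iso_dim:
  assumes "V.subspace W" "W \<subseteq> ambient (l+m)" "isotropic l m W"
  shows "V.dim W \<le> l"
proof -
  define pr where "pr = (\<lambda>w::nat\<Rightarrow>complex. \<lambda>i. if i < l then w i else 0)"
  have md: "module cscale" using module_iff_vector_space vs_cscale by blast
  have hom: "module_hom cscale cscale pr"
    unfolding module_hom_iff using md by (auto simp: pr_def cscale_def fun_eq_iff)
  have inj: "inj_on pr W"
  proof (rule inj_onI)
    fix x y assume x: "x \<in> W" and y: "y \<in> W" and e: "pr x = pr y"
    define w where "w = x - y"
    have wW: "w \<in> W" using V.subspace_diff[OF assms(1) x y] by (simp add: w_def)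
    have w0: "w i = 0" if "i < l" for i
    proof -
      from fun_cong[OF e, of i] have "x i = y i" using that by (simp add: pr_def)
      then show ?thesis by (simp add: w_def)
    qed
    have "herm l m w w = 0" using assms(3) wW by (simp add: isotropic_def)
    hence "(\<Sum>i\<in>{l..<l+m}. w i * cnj (w i)) = 0" using w0 by (simp add: herm_def)
    moreover have "complex_of_real (\<Sum>i\<in>{l..<l+m}. (cmod (w i))^2) = (\<Sum>i\<in>{l..<l+m}. w i * cnj (w i))"
      by (simp only: of_real_sum complex_norm_square)
    ultimately have "(\<Sum>i\<in>{l..<l+m}. (cmod (w i))^2) = 0" by (metis of_real_eq_0_iff)
    hence c0: "\<forall>i\<in>{l..<l+m}. w i = 0" using sum_nonneg_eq_0_iff[of "{l..<l+m}" "\<lambda>i. (cmod (w i))^2"] by simp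
    have "w = 0"
    proof
      fix i show "w i = 0 i"
      proof (cases "i < l")
        case True then show ?thesis using w0 by simp
      next
        case False
        show ?thesis
        proof (cases "i < l + m")
          case True then show ?thesis using False c0 by auto
        next
          case False then show ?thesis using wW assms(2) by (auto simp: ambient_def)
        qed
      qed
    qed
    thus "x = y" by (simp add: w_def)
  qed
  obtain B where B: "finite B" "B \<subseteq> W" "V.independent B" "V.span B = W" "card B = V.dim W"
    by (rule basis_ex[OF assms(1,2)])
  have ind: "V.independent (pr ` B)"
    using module_hom.independent_injective_image[OF hom B(3)] inj B(4) by simp
  have "pr ` B \<subseteq> ambient l" by (auto simp: pr_def ambient_def)
  then have "card (pr ` B) \<le> l" using indep_bound[OF ind] by blast
  moreover have "card (pr ` B) = card B" using card_image inj_on_subset[OF inj B(2)] by blast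
  ultimately show ?thesis using B(5) by simp
qed

lemma Sfam_props:
  assumes "E0 \<in> Nset l m" "cdim E0 = l"
  shows "E \<in> Sfam l m E0 j \<Longrightarrow> E \<in> Nset l m \<and> cdim E = l"
  using assms by (induction j arbitrary: E) auto

lemma step_main:
  assumes l0: "0 < l" and Z: "Z \<in> Nset l m" "cdim Z = q" and E0: "E0 \<in> Nset l m" "cdim E0 = l"
  shows "\<exists>F\<in>Sfam l m E0 j. cdim (F \<inter> Z) \<ge> min j q"
proof (induction j)
  case 0
  then show ?case by simp
next
  case (Suc j)
  then obtain F where F: "F \<in> Sfam l m E0 j" "cdim (F \<inter> Z) \<ge> min j q" by blast
  have FN: "F \<in> Nset l m" "cdim F = l" using Sfam_props[OF E0 F(1)] by auto
  have Fs: "V.subspace F" "F \<subseteq> ambient (l+m)" "isotropic l m F"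
    using FN by (auto simp: Nset_def csub_eq)
  have Zs: "V.subspace Z" "Z \<subseteq> ambient (l+m)" "isotropic l m Z"
    using Z by (auto simp: Nset_def csub_eq)
  show ?case
  proof (cases "Z \<subseteq> F")
    case True
    then have "F \<inter> Z = Z" by blast
    moreover have "F \<in> Sfam l m E0 (Suc j)"
    proof -
      have "F \<in> {E \<in> Nset l m. cdim E = l \<and> cdim (E \<inter> F) \<ge> l - 1}" using FN by simp
      then show ?thesis unfolding Sfam.simps(2) using F(1) by blast
    qed
    ultimately show ?thesis using Z(2) by (intro bexI[of _ F]) auto
  next
    case False
    then obtain v where v: "v \<in> Z" "v \<notin> F" by blast
    define K where "K = F \<inter> {w. herm l m w v = 0}"
    define F' where "F' = V.span (insert v K)"
    have Ks: "V.subspace K" unfolding K_def using V.subspace_inter[OF Fs(1) perp_l_sub] .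
    have Ka: "K \<subseteq> ambient (l+m)" using Fs(2) K_def by blast
    have va: "v \<in> ambient (l+m)" using v Zs(2) by blast
    have F's: "V.subspace F'" unfolding F'_def by simp
    have F'a: "F' \<subseteq> ambient (l+m)" unfolding F'_def
      using V.span_minimal[OF _ amb_sub] Ka va by blast
    have F'i: "isotropic l m F'" unfolding F'_def
    proof (rule iso_span, intro ballI)
      fix a b assume a: "a \<in> insert v K" and b: "b \<in> insert v K"
      have vv: "herm l m v v = 0" using Zs(3) v by (simp add: isotropic_def)
      have Kv: "\<And>k. k \<in> K \<Longrightarrow> herm l m k v = 0" by (simp add: K_def)
      have vK: "herm l m v k = 0" if "k \<in> K" for k
      proof -
        have "herm l m v k = cnj (herm l m k v)" by (rule herm_sym)
        then show ?thesis using Kv[OF that] by simp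
      qed
      have KK: "\<And>k k'. k \<in> K \<Longrightarrow> k' \<in> K \<Longrightarrow> herm l m k k' = 0"
        using Fs(3) by (auto simp: K_def isotropic_def)
      show "herm l m a b = 0"
      proof (cases "a = v")
        case True
        then show ?thesis using b vv vK by (cases "b = v") auto
      next
        case False
        then have aK: "a \<in> K" using a by blast
        then show ?thesis using b Kv KK by (cases "b = v") auto
      qed
    qed
    have vK: "v \<notin> K" using v K_def by blast
    have dF': "V.dim F' = V.dim K + 1" unfolding F'_def by (rule dim_ins_eq[OF Ks Ka vK])
    have dK: "V.dim F \<le> V.dim K + 1" unfolding K_def by (rule dim_perp[OF Fs(1,2)])
    have dle: "V.dim F' \<le> l" by (rule iso_dim[OF F's F'a F'i])
    have dF'l: "cdim F' = l" using dF' dK dle FN(2) by (simp add: cdim_eq)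
    have KF': "K \<subseteq> F'" unfolding F'_def using V.span_superset by blast
    have "V.dim K \<le> V.dim (F' \<inter> F)"
      by (rule dim_mono'[OF Ks V.subspace_inter[OF F's Fs(1)] _ ]) (use KF' K_def F'a in auto)
    then have d1: "cdim (F' \<inter> F) \<ge> l - 1" using dF' dF'l by (simp add: cdim_eq)
    have FZK: "F \<inter> Z \<subseteq> K" using Zs(3) v by (auto simp: K_def isotropic_def)
    have FZs: "V.subspace (F \<inter> Z)" using V.subspace_inter[OF Fs(1) Zs(1)] .
    have FZa: "F \<inter> Z \<subseteq> ambient (l+m)" using Fs(2) by blast
    have vFZ: "v \<notin> F \<inter> Z" using v by blast
    have sub2: "V.span (insert v (F \<inter> Z)) \<subseteq> F' \<inter> Z"
    proof (rule V.span_minimal)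
      show "V.subspace (F' \<inter> Z)" using V.subspace_inter[OF F's Zs(1)] .
      have "v \<in> F'" unfolding F'_def by (rule V.span_base) simp
      then show "insert v (F \<inter> Z) \<subseteq> F' \<inter> Z" using FZK KF' v by blast
    qed
    have "V.dim (V.span (insert v (F \<inter> Z))) \<le> V.dim (F' \<inter> Z)"
      by (rule dim_mono'[OF V.subspace_span V.subspace_inter[OF F's Zs(1)] sub2]) (use Zs(2) in blast)
    then have "cdim (F' \<inter> Z) \<ge> cdim (F \<inter> Z) + 1"
      using dim_ins_eq[OF FZs FZa vFZ] by (simp add: cdim_eq)
    then have d2: "cdim (F' \<inter> Z) \<ge> min (Suc j) q" using F(2) by linarith
    have "F' \<in> Nset l m" using F's F'a F'i by (simp add: Nset_def csub_eq)
    then have "F' \<in> {E \<in> Nset l m. cdim E = l \<and> cdim (E \<inter> F) \<ge> l - 1}" using dF'l d1 by blast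
    then have "F' \<in> Sfam l m E0 (Suc j)" unfolding Sfam.simps(2) using F(1) by blast
    then show ?thesis using d2 by blast
  qed
qed

theorem lemma3p2:
  fixes p q l :: nat and Z0 E0 :: "(nat \<Rightarrow> complex) set"
  assumes "0 < q" and "q < p" and "q \<le> l" and "2 * l \<le> p + q"
    and "q < l"
    and "Z0 \<in> Sset l q p"
    and "E0 \<in> Lambda l (p + q - l) l Z0"
  shows "(\<Union>E\<in>Sfam l (p + q - l) E0 q. GrE q E) = Sset l q p"
proof -
  have lm: "l + (p + q - l) = p + q" using assms(4) by arith
  have E0: "E0 \<in> Nset l (p + q - l)" "cdim E0 = l" using assms(7) by (auto simp: Lambda_def)
  show ?thesis
  proof
    show "(\<Union>E\<in>Sfam l (p + q - l) E0 q. GrE q E) \<subseteq> Sset l q p"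
    proof
      fix Z assume "Z \<in> (\<Union>E\<in>Sfam l (p + q - l) E0 q. GrE q E)"
      then obtain E where E: "E \<in> Sfam l (p + q - l) E0 q" "Z \<in> GrE q E" by blast
      have "E \<in> Nset l (p + q - l)" using Sfam_props[OF E0 E(1)] by blast
      then have EN: "E \<subseteq> ambient (p + q)" "isotropic l (p + q - l) E"
        unfolding Nset_def lm by auto
      have ZG: "csubspace Z" "Z \<subseteq> E" "cdim Z = q" using E(2) unfolding GrE_def by auto
      have "isotropic l (p + q - l) Z" using EN(2) ZG(2) unfolding isotropic_def by blast
      moreover have "Z \<in> Grass q p" unfolding Grass_def using ZG EN(1) by auto
      ultimately show "Z \<in> Sset l q p" unfolding Sset_def by blast
    qed
  next
    show "Sset l q p \<subseteq> (\<Union>E\<in>Sfam l (p + q - l) E0 q. GrE q E)"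
    proof
      fix Z assume Z: "Z \<in> Sset l q p"
      have ZN: "Z \<in> Nset l (p + q - l)" "cdim Z = q" using Z
        unfolding Nset_def Sset_def Grass_def lm by auto
      obtain F where F: "F \<in> Sfam l (p + q - l) E0 q" "cdim (F \<inter> Z) \<ge> q"
        using step_main[OF _ ZN E0, of q] assms(5) by auto
      have FN: "F \<in> Nset l (p + q - l)" using Sfam_props[OF E0 F(1)] by blast
      have Zs: "V.subspace Z" "Z \<subseteq> ambient (l + (p + q - l))" using ZN by (auto simp: Nset_def csub_eq)
      have Fs: "V.subspace F" using FN by (auto simp: Nset_def csub_eq)
      have "F \<inter> Z = Z"
        by (rule dim_eq_sub[OF V.subspace_inter[OF Fs Zs(1)] Zs(1) _ Zs(2)])
           (use F(2) ZN(2) in \<open>auto simp: cdim_eq\<close>)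
      then have "Z \<in> GrE q F" using ZN by (auto simp: GrE_def Nset_def)
      then show "Z \<in> (\<Union>E\<in>Sfam l (p + q - l) E0 q. GrE q E)" using F(1) by blast
    qed
  qed
qed

end
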